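(* Let $k\ge 3$, let $w$ be a word over $\Sigma=\{a,b\}$, and let $j\ge k$ be a forbidden position in $w$ with respect to $S_k$. Then the position $j-k$ is forbidden in $w$ with respect to $S_k$ if and only if either $j-1$ is forbidden in $w$ or $w[j-k+1..j-1]\in\{a^{k-1},b^{k-1}\}$.
   Context: $\Sigma=\{a,b\}$. For $k\ge 3$, $S_k=\left(\Sigma^k\setminus\{ba^{k-1},b^{k-1}a\}\right)\cup\left(\Sigma^{k-1}\setminus\{a^{k-1},b^{k-1}\}\right)$. For a set $S$ of words, $\mathit{Pref}(S^* )$ is the set of all prefixes (including the empty word) of words in $S^*$. For a word $w=w_1\cdots w_n$ and indices $i,j$, $w[i..j]=w_iw_{i+1}\cdots w_j$ if $i\le j$ and the empty word if $i>j$. A position $j$ with $0\le j\le n-1$ is forbidden in $w$ (with respect to $S_k$) if $w[j+1..n]\notin\mathit{Pref}(S_k^* )$, i.e. the suffix of $w$ obtained by deleting the first $j$ letters is not a prefix of any word in $S_k^*$. *)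

theory Defs
  imports Main
begin

datatype sigma = a | b

type_synonym word = "sigma list"

definition S :: "nat \<Rightarrow> word set" where
  "S k = ({u. length u = k} - {b # replicate (k - 1) a, replicate (k - 1) b @ [a]})
       \<union> ({u. length u = k - 1} - {replicate (k - 1) a, replicate (k - 1) b})"

definition star :: "word set \<Rightarrow> word set" where
  "star L = {concat ws | ws. set ws \<subseteq> L}"

definition Pref :: "word set \<Rightarrow> word set" where
  "Pref L = {u. \<exists>v. u @ v \<in> L}"

text \<open>Position j (0 <= j <= n-1) is forbidden in w w.r.t. S_k iff the suffix of w obtained
  by deleting the first j letters, i.e. w[j+1..n], is not in Pref(S_k^*).\<close>
definition forbidden :: "nat \<Rightarrow> word \<Rightarrow> nat \<Rightarrow> bool" where
  "forbidden k w j \<longleftrightarrow> j < length w \<and> drop j w \<notin> Pref (star (S k))"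

text \<open>Factor w[i..j] with 1-based indices (empty if i > j).\<close>
definition factor :: "word \<Rightarrow> nat \<Rightarrow> nat \<Rightarrow> word" where
  "factor w i j = take (j + 1 - i) (drop (i - 1) w)"

end

theory Submission
  imports Defs
begin

lemma P_nil: "[] \<in> Pref (star L)"
  unfolding Pref_def star_def by (rule CollectI, rule exI[of _ "[]"], auto intro!: exI[of _ "[]"])

lemma P_cons: "s \<in> L \<Longrightarrow> y \<in> Pref (star L) \<Longrightarrow> s @ y \<in> Pref (star L)"
  unfolding Pref_def star_def
proof (clarsimp)
  fix v ws assume "s \<in> L" "y @ v = concat ws" "set ws \<subseteq> L"
  then show "\<exists>v. \<exists>ws. s @ y @ v = concat ws \<and> set ws \<subseteq> L"
    by (intro exI[of _ v] exI[of _ "s # ws"]) auto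
qed

lemma S_len: "s \<in> S k \<Longrightarrow> length s = k \<or> length s = k - 1"
  unfolding S_def by auto

lemma P_dec:
  assumes "k \<ge> 3" "u \<in> Pref (star (S k))" "length u > k"
  shows "\<exists>s y. s \<in> S k \<and> u = s @ y \<and> y \<in> Pref (star (S k))"
proof -
  from assms(2) obtain v ws where e: "u @ v = concat ws" and ss: "set ws \<subseteq> S k"
    unfolding Pref_def star_def by auto
  have "ws \<noteq> []" using e assms(3) by auto
  then obtain s ws' where ws: "ws = s # ws'" by (cases ws) auto
  have sS: "s \<in> S k" using ss ws by auto
  have ls: "length s \<le> k" using S_len[OF sS] by auto
  have e2: "u @ v = s @ concat ws'" using e ws by simp
  have le: "length s \<le> length u" using ls assms(3) by simp
  have t: "take (length s) u = s"
    using arg_cong[OF e2, of "take (length s)"] le by simp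
  have "u = s @ drop (length s) u" using t by (metis append_take_drop_id)
  moreover have "drop (length s) u @ v = concat ws'"
    using arg_cong[OF e2, of "drop (length s)"] le by simp
  ultimately show ?thesis using sS ss ws unfolding Pref_def star_def by auto
qed

theorem lemma1:
  fixes k j :: nat and w :: word
  assumes "k \<ge> 3" and "j \<ge> k" and "forbidden k w j"
  shows "forbidden k w (j - k) \<longleftrightarrow>
           (forbidden k w (j - 1) \<or>
            factor w (j - k + 1) (j - 1) \<in> {replicate (k - 1) a, replicate (k - 1) b})"
proof -
  let ?P = "Pref (star (S k))"
  have jl: "j < length w" and vP: "drop j w \<notin> ?P" using assms(3) unfolding forbidden_def by auto
  define x where "x = factor w (j - k + 1) (j - 1)"
  define c where "c = w ! (j - 1)"
  define v where "v = drop j w"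
  have x: "x = take (k - 1) (drop (j - k) w)" unfolding x_def factor_def
    using assms(1,2) by (simp add: Suc_diff_le)
  have lx: "length x = k - 1" using x jl assms by simp
  have cv: "drop (j - 1) w = c # v" unfolding c_def v_def using jl assms
    by (metis Cons_nth_drop_Suc Suc_diff_1 diff_less less_le_trans zero_less_one order_less_le_trans less_imp_diff_less le_less_trans
        not_numeral_le_zero nat_less_le neq0_conv numeral_3_eq_3 zero_less_Suc)
  have u: "drop (j - k) w = x @ c # v"
  proof -
    have "drop (j - k) w = take (k - 1) (drop (j - k) w) @ drop (k - 1) (drop (j - k) w)" by (rule append_take_drop_id[symmetric])
    moreover have "drop (k - 1) (drop (j - k) w) = drop (j - 1) w" using assms(1,2) by simp
    ultimately show ?thesis using x cv by simp
  qed
  have vne: "v \<noteq> []" using vP P_nil unfolding v_def by metis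
  have f1: "forbidden k w (j - 1) \<longleftrightarrow> c # v \<notin> ?P" unfolding forbidden_def using cv jl by auto
  have f0: "forbidden k w (j - k) \<longleftrightarrow> x @ c # v \<notin> ?P" unfolding forbidden_def using u jl by auto
  show ?thesis
  proof
    assume "forbidden k w (j - k)"
    hence nu: "x @ c # v \<notin> ?P" using f0 by simp
    show "forbidden k w (j - 1) \<or> factor w (j - k + 1) (j - 1) \<in> {replicate (k - 1) a, replicate (k - 1) b}"
    proof (rule ccontr)
      assume "\<not> ?thesis"
      hence "c # v \<in> ?P" "x \<notin> {replicate (k - 1) a, replicate (k - 1) b}" using f1 x_def by auto
      moreover have "x \<in> S k" using calculation(2) lx unfolding S_def by auto
      ultimately show False using P_cons nu by blast
    qed
  next
    assume h: "forbidden k w (j - 1) \<or> factor w (j - k + 1) (j - 1) \<in> {replicate (k - 1) a, replicate (k - 1) b}"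
    show "forbidden k w (j - k)" unfolding f0
    proof
      assume uP: "x @ c # v \<in> ?P"
      have "length (x @ c # v) > k" using lx vne assms(1) by (cases v) auto
      then obtain s y where s: "s \<in> S k" and e: "x @ c # v = s @ y" and yP: "y \<in> ?P"
        using P_dec[OF assms(1) uP] by blast
      from S_len[OF s] show False
      proof
        assume lsk: "length s = k"
        have "take k (x @ c # v) = x @ [c]" "drop k (x @ c # v) = v"
          using lx assms(1) by (simp_all add: take_append drop_append)
        hence "s = x @ [c]" "y = v" using e lsk by auto
        thus False using yP vP v_def by simp
      next
        assume ls: "length s = k - 1"
        hence "s = x" "y = c # v" using e lx by (auto simp: append_eq_append_conv_if)
        moreover have "s \<notin> {replicate (k - 1) a, replicate (k - 1) b}" using s ls assms(1)
          unfolding S_def by auto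
        ultimately show False using h f1 yP x_def by auto
      qed
    qed
  qed
qed

end
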